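(* Let $k\ge2$, $n\ge1$ and $1\le r\le n$. If $k-1$ divides $n-r$, then, with $m=\frac{n-r}{k-1}$ (which equals the number of hyperedges of any such hyperforest), the number of rooted spanning hyperforests of $\mathcal K_n^{(k)}$ with exactly $r$ components is $$t_{n,r}(\mathbf e_k)=\binom{n-1}{r-1}\frac{(n-r)!}{m!\,[(k-1)!]^{m}}\,n^{m};$$ if $k-1$ does not divide $n-r$, then $t_{n,r}(\mathbf e_k)=0$.
   Context: $\mathcal K_n^{(k)}$ is the $k$-uniform complete hypergraph: vertex set $\{1,\dots,n\}$, hyperedges all $k$-element subsets. A cycle is a sequence $(v_0,e_1,v_1,\dots,e_\ell,v_\ell)$ with $\ell\ge2$, $v_{i-1},v_i\in e_i$, $v_0,\dots,v_{\ell-1}$ distinct, $v_\ell=v_0$, and $e_1,\dots,e_\ell$ distinct hyperedges. A spanning hyperforest is a set of hyperedges with no cycle; its components are the classes of vertices connected by walks (isolated vertices included); a rooted spanning hyperforest has one distinguished root vertex per component. $t_{n,r}(\mathbf e_k)$ denotes the number of rooted spanning hyperforests of $\mathcal K_n^{(k)}$ with exactly $r$ components. *)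

theory Defs
  imports Complex_Main
begin

definition hyperedges :: "nat \<Rightarrow> nat \<Rightarrow> nat set set" where
  "hyperedges n k = {e. e \<subseteq> {1..n} \<and> card e = k}"

text \<open>A cycle (v_0,e_1,v_1,...,e_l,v_l) in an edge set F, encoded with
  vs i = v_i and es i = e_(i+1) for i < l.\<close>
definition has_cycle :: "nat set set \<Rightarrow> bool" where
  "has_cycle F \<longleftrightarrow> (\<exists>(l::nat) (vs::nat \<Rightarrow> nat) (es::nat \<Rightarrow> nat set).
     l \<ge> 2 \<and> (\<forall>i<l. es i \<in> F \<and> vs i \<in> es i \<and> vs (Suc i) \<in> es i) \<and>
     inj_on vs {..<l} \<and> vs l = vs 0 \<and> inj_on es {..<l})"

definition spanning_hyperforest :: "nat \<Rightarrow> nat \<Rightarrow> nat set set \<Rightarrow> bool" where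
  "spanning_hyperforest n k F \<longleftrightarrow> F \<subseteq> hyperedges n k \<and> \<not> has_cycle F"

definition adj :: "nat set set \<Rightarrow> (nat \<times> nat) set" where
  "adj F = {(u, v). \<exists>e\<in>F. u \<in> e \<and> v \<in> e}"

definition connected_rel :: "nat \<Rightarrow> nat set set \<Rightarrow> (nat \<times> nat) set" where
  "connected_rel n F = {(u, v). u \<in> {1..n} \<and> v \<in> {1..n} \<and> (u, v) \<in> (adj F)\<^sup>*}"

definition components :: "nat \<Rightarrow> nat set set \<Rightarrow> nat set set" where
  "components n F = {1..n} // connected_rel n F"

text \<open>Rooted spanning hyperforests with exactly r components: pairs (F, R) where
  R is the set of roots, containing exactly one vertex of each component.\<close>
definition rooted_forests :: "nat \<Rightarrow> nat \<Rightarrow> nat \<Rightarrow> (nat set set \<times> nat set) set" where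
  "rooted_forests n k r = {(F, R). spanning_hyperforest n k F \<and>
     card (components n F) = r \<and> R \<subseteq> {1..n} \<and>
     (\<forall>C\<in>components n F. card (R \<inter> C) = 1)}"

definition t_count :: "nat \<Rightarrow> nat \<Rightarrow> nat \<Rightarrow> nat" where
  "t_count n r k = card (rooted_forests n k r)"

end

theory Submission
  imports Defs
begin

definition reach :: "nat set set \<Rightarrow> nat \<Rightarrow> nat \<Rightarrow> bool" where
  "reach F x y \<longleftrightarrow> (x, y) \<in> (adj F)\<^sup>*"

lemma adj_sym: "(u,v) \<in> adj F \<Longrightarrow> (v,u) \<in> adj F" by (auto simp: adj_def)

lemma reach_refl[simp]: "reach F x x" by (simp add: reach_def)

lemma reach_sym: "reach F x y \<Longrightarrow> reach F y x"
  unfolding reach_def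
proof (induction rule: rtrancl_induct)
  case base then show ?case by simp
next
  case (step y z)
  from adj_sym[OF step(2)] step.IH show ?case by (rule converse_rtrancl_into_rtrancl)
qed

lemma reach_trans: "reach F x y \<Longrightarrow> reach F y z \<Longrightarrow> reach F x z"
  unfolding reach_def by (rule rtrancl_trans)

lemma reach_edge: "e \<in> F \<Longrightarrow> a \<in> e \<Longrightarrow> b \<in> e \<Longrightarrow> reach F a b"
  unfolding reach_def adj_def by (rule r_into_rtrancl) blast

lemma adj_mono: "F \<subseteq> G \<Longrightarrow> adj F \<subseteq> adj G" by (auto simp: adj_def)

lemma reach_mono: "F \<subseteq> G \<Longrightarrow> reach F x y \<Longrightarrow> reach G x y"
  unfolding reach_def using rtrancl_mono[OF adj_mono] by blast

lemma reach_empty: "reach {} x y \<longleftrightarrow> x = y"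
  by (simp add: reach_def adj_def)

lemma reach_insert:
  assumes "reach (insert e F) x y"
  shows "reach F x y \<or> (\<exists>a\<in>e. \<exists>b\<in>e. reach F x a \<and> reach F b y)"
  using assms unfolding reach_def
proof (induction rule: rtrancl_induct)
  case base then show ?case by simp
next
  case (step y z)
  then obtain f where f: "f \<in> insert e F" "y \<in> f" "z \<in> f" by (auto simp: adj_def)
  show ?case
  proof (cases "f = e")
    case True
    with step.IH f show ?thesis by (metis reach_def rtrancl.rtrancl_refl)
  next
    case False
    with f have "(y,z) \<in> adj F" by (auto simp: adj_def)
    with step.IH show ?thesis by (meson rtrancl.rtrancl_into_rtrancl)
  qed
qed

lemma reach_bound:
  assumes "F \<subseteq> hyperedges n k" "reach F x y"
  shows "x = y \<or> y \<in> {1..n}"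
  using assms(2) unfolding reach_def
proof (induction rule: rtrancl_induct)
  case base then show ?case by simp
next
  case (step y z)
  then obtain f where "f \<in> F" "z \<in> f" by (auto simp: adj_def)
  moreover have "f \<subseteq> {1..n}" using assms(1) \<open>f \<in> F\<close> by (auto simp: hyperedges_def)
  ultimately show ?case by auto
qed

definition walk :: "nat set set \<Rightarrow> nat \<Rightarrow> (nat \<Rightarrow> nat) \<Rightarrow> (nat \<Rightarrow> nat set) \<Rightarrow> bool" where
  "walk F p vs es \<longleftrightarrow> (\<forall>i<p. es i \<in> F \<and> vs i \<in> es i \<and> vs (Suc i) \<in> es i)"

lemma seg_reach:
  assumes "\<And>i. j \<le> i \<Longrightarrow> i < q \<Longrightarrow> es i \<in> F \<and> vs i \<in> es i \<and> vs (Suc i) \<in> es i"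
    and "j \<le> q"
  shows "reach F (vs j) (vs q)"
  using assms
proof (induction q)
  case 0 then show ?case by simp
next
  case (Suc q)
  show ?case
  proof (cases "j = Suc q")
    case True then show ?thesis by simp
  next
    case False
    with Suc.prems have jq: "j \<le> q" by simp
    have "reach F (vs j) (vs q)" using Suc.IH Suc.prems jq by simp
    moreover have "reach F (vs q) (vs (Suc q))"
      using Suc.prems(1)[of q] jq by (meson lessI reach_edge)
    ultimately show ?thesis by (rule reach_trans)
  qed
qed

lemma reach_walk:
  assumes "reach F a b"
  shows "\<exists>p vs es. walk F p vs es \<and> vs 0 = a \<and> vs p = b"
  using assms unfolding reach_def
proof (induction rule: rtrancl_induct)
  case base
  have "walk F 0 (\<lambda>_. a) (\<lambda>_. {})" by (simp add: walk_def)
  then show ?case by blast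
next
  case (step y z)
  then obtain p vs es where w: "walk F p vs es" "vs 0 = a" "vs p = y" by blast
  from step(2) obtain f where f: "f \<in> F" "y \<in> f" "z \<in> f" by (auto simp: adj_def)
  define vs' where "vs' = vs(Suc p := z)"
  define es' where "es' = es(p := f)"
  have "walk F (Suc p) vs' es'"
    using w f unfolding walk_def vs'_def es'_def
    by (auto simp: less_Suc_eq)
  moreover have "vs' 0 = a" "vs' (Suc p) = z" using w by (auto simp: vs'_def)
  ultimately show ?case by blast
qed

lemma simple_walk:
  assumes "reach F a b"
  shows "\<exists>p vs es. walk F p vs es \<and> vs 0 = a \<and> vs p = b \<and> inj_on vs {..p} \<and> inj_on es {..<p}"
proof -
  let ?Q = "\<lambda>p. \<exists>vs es. walk F p vs es \<and> vs 0 = a \<and> vs p = b"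
  have "\<exists>p. ?Q p" using reach_walk[OF assms] by blast
  then obtain p where Qp: "?Q p" and minp: "\<And>p'. p' < p \<Longrightarrow> \<not> ?Q p'"
    using exists_least_iff[of ?Q] by blast
  then obtain vs es where w: "walk F p vs es" "vs 0 = a" "vs p = b" by blast
  have injv: "inj_on vs {..p}"
  proof (rule ccontr)
    assume "\<not> inj_on vs {..p}"
    then obtain i j where ij: "i < j" "j \<le> p" "vs i = vs j"
      unfolding inj_on_def by (metis atMost_iff linorder_neqE_nat)
    define d where "d = j - i"
    define vs' where "vs' = (\<lambda>t. if t < i then vs t else vs (t + d))"
    define es' where "es' = (\<lambda>t. if t < i then es t else es (t + d))"
    have "walk F (p - d) vs' es'"
      unfolding walk_def
    proof (intro allI impI)
      fix t assume t: "t < p - d"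
      show "es' t \<in> F \<and> vs' t \<in> es' t \<and> vs' (Suc t) \<in> es' t"
      proof (cases "t < i")
        case True
        then have "t < p" using ij by simp
        with w(1) have h: "es t \<in> F \<and> vs t \<in> es t \<and> vs (Suc t) \<in> es t" by (simp add: walk_def)
        show ?thesis
        proof (cases "Suc t < i")
          case True with h \<open>t < i\<close> show ?thesis by (simp add: vs'_def es'_def)
        next
          case False
          then have "Suc t = i" using \<open>t<i\<close> by simp
          then have "vs' (Suc t) = vs (Suc t)" using ij by (simp add: vs'_def d_def)
          with h \<open>t < i\<close> show ?thesis by (simp add: vs'_def es'_def)
        qed
      next
        case False
        then have "t + d < p" using t ij d_def by simp
        with w(1) have h: "es (t+d) \<in> F \<and> vs (t+d) \<in> es (t+d) \<and> vs (Suc (t+d)) \<in> es (t+d)"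
          by (simp add: walk_def)
        with False show ?thesis by (simp add: vs'_def es'_def)
      qed
    qed
    moreover have "vs' 0 = a"
      using w ij by (cases "i = 0") (auto simp: vs'_def d_def)
    moreover have "vs' (p - d) = b"
      using w ij by (auto simp: vs'_def d_def)
    moreover have "p - d < p" using ij d_def by simp
    ultimately show False using minp by blast
  qed
  have inje: "inj_on es {..<p}"
  proof (rule ccontr)
    assume "\<not> inj_on es {..<p}"
    then obtain i j where ij: "i < j" "j < p" "es i = es j"
      unfolding inj_on_def by (metis lessThan_iff linorder_neqE_nat)
    define d where "d = j - i"
    define vs' where "vs' = (\<lambda>t. if t \<le> i then vs t else vs (t + d))"
    define es' where "es' = (\<lambda>t. if t \<le> i then es t else es (t + d))"
    have "walk F (p - d) vs' es'"
      unfolding walk_def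
    proof (intro allI impI)
      fix t assume t: "t < p - d"
      show "es' t \<in> F \<and> vs' t \<in> es' t \<and> vs' (Suc t) \<in> es' t"
      proof (cases "t < i")
        case True
        then have "t < p" using ij by simp
        with w(1) have h: "es t \<in> F \<and> vs t \<in> es t \<and> vs (Suc t) \<in> es t" by (simp add: walk_def)
        with True show ?thesis by (simp add: vs'_def es'_def)
      next
        case False
        show ?thesis
        proof (cases "t = i")
          case True
          have "i < p" "j < p" using ij by auto
          with w(1) have "es i \<in> F" "vs i \<in> es i" "vs (Suc j) \<in> es j" by (auto simp: walk_def)
          moreover have "Suc i + d = Suc j" using ij d_def by simp
          ultimately show ?thesis using True ij by (simp add: vs'_def es'_def)
        next
          case False
          with \<open>\<not> t < i\<close> have "i < t" by simp
          have "t + d < p" using t ij d_def by simp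
          with w(1) have h: "es (t+d) \<in> F \<and> vs (t+d) \<in> es (t+d) \<and> vs (Suc (t+d)) \<in> es (t+d)"
            by (simp add: walk_def)
          with \<open>i < t\<close> show ?thesis by (simp add: vs'_def es'_def)
        qed
      qed
    qed
    moreover have "vs' 0 = a" using w by (simp add: vs'_def)
    moreover have "vs' (p - d) = b"
      using w ij by (auto simp: vs'_def d_def)
    moreover have "p - d < p" using ij d_def by simp
    ultimately show False using minp by blast
  qed
  from w injv inje show ?thesis by blast
qed

lemma acyclic_mono: "F \<subseteq> G \<Longrightarrow> \<not> has_cycle G \<Longrightarrow> \<not> has_cycle F"
  unfolding has_cycle_def by blast

lemma remove_edge_disconnected:
  assumes "\<not> has_cycle G" "e \<in> G" "a \<in> e" "b \<in> e" "a \<noteq> b"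
  shows "\<not> reach (G - {e}) a b"
proof
  assume "reach (G - {e}) a b"
  from simple_walk[OF this] obtain p vs es where
    w: "walk (G - {e}) p vs es" "vs 0 = a" "vs p = b" "inj_on vs {..p}" "inj_on es {..<p}"
    by blast
  have p1: "p \<ge> 1" using w assms(5) by (cases p) auto
  define vs' where "vs' = (\<lambda>t. if t \<le> p then vs t else a)"
  define es' where "es' = (\<lambda>t. if t < p then es t else e)"
  have "has_cycle G"
    unfolding has_cycle_def
  proof (intro exI conjI)
    show "Suc p \<ge> 2" using p1 by simp
    show "\<forall>i<Suc p. es' i \<in> G \<and> vs' i \<in> es' i \<and> vs' (Suc i) \<in> es' i"
    proof (intro allI impI)
      fix i assume "i < Suc p"
      show "es' i \<in> G \<and> vs' i \<in> es' i \<and> vs' (Suc i) \<in> es' i"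
      proof (cases "i < p")
        case True
        with w(1) show ?thesis by (auto simp: walk_def vs'_def es'_def)
      next
        case False
        then have "i = p" using \<open>i < Suc p\<close> by simp
        then show ?thesis using assms w by (auto simp: vs'_def es'_def)
      qed
    qed
    show "inj_on vs' {..<Suc p}"
      using w(4) by (auto simp: inj_on_def vs'_def lessThan_Suc_atMost)
    show "vs' (Suc p) = vs' 0" using w by (simp add: vs'_def)
    show "inj_on es' {..<Suc p}"
    proof -
      have "\<forall>i<p. es i \<noteq> e" using w(1) by (auto simp: walk_def)
      then show ?thesis using w(5) unfolding inj_on_def es'_def
        by (metis lessThan_iff less_SucE)
    qed
  qed
  with assms(1) show False by simp
qed

lemma add_edge_acyclic:
  assumes "\<not> has_cycle F" "\<And>a b. a \<in> e \<Longrightarrow> b \<in> e \<Longrightarrow> a \<noteq> b \<Longrightarrow> \<not> reach F a b"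
  shows "\<not> has_cycle (insert e F)"
proof
  assume "has_cycle (insert e F)"
  then obtain l vs es where c: "l \<ge> 2" "\<forall>i<l. es i \<in> insert e F \<and> vs i \<in> es i \<and> vs (Suc i) \<in> es i"
    "inj_on vs {..<l}" "vs l = vs 0" "inj_on es {..<l}"
    unfolding has_cycle_def by blast
  show False
  proof (cases "\<exists>i<l. es i = e")
    case False
    then have "has_cycle F" using c unfolding has_cycle_def by blast
    with assms(1) show False by simp
  next
    case True
    then obtain i where i: "i < l" "es i = e" by blast
    have ne: "\<And>t. t < l \<Longrightarrow> t \<noteq> i \<Longrightarrow> es t \<in> F"
    proof -
      fix t assume "t < l" "t \<noteq> i"
      then have "es t \<noteq> e" using c(5) i unfolding inj_on_def by auto
      with c(2) \<open>t < l\<close> show "es t \<in> F" by auto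
    qed
    have r1: "reach F (vs (Suc i)) (vs l)"
      by (rule seg_reach[of "Suc i" l es F vs]) (use ne c(2) i in auto)
    have r2: "reach F (vs 0) (vs i)"
      by (rule seg_reach[of 0 i es F vs]) (use ne c(2) i in auto)
    have "reach F (vs (Suc i)) (vs i)" using r1 r2 c(4) reach_trans by metis
    moreover have "vs (Suc i) \<in> e" "vs i \<in> e" using c(2) i by auto
    moreover have "vs (Suc i) \<noteq> vs i"
    proof (cases "Suc i < l")
      case True
      then show ?thesis using c(3) unfolding inj_on_def by fastforce
    next
      case False
      then have "Suc i = l" using i by simp
      then have "i \<noteq> 0" using c(1) by simp
      then show ?thesis using c(3) c(4) \<open>Suc i = l\<close> i unfolding inj_on_def by fastforce
    qed
    ultimately show False using assms(2) by blast
  qed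
qed


definition RC :: "nat \<Rightarrow> nat set set \<Rightarrow> nat set \<Rightarrow> bool" where
  "RC n F R \<longleftrightarrow> R \<subseteq> {1..n} \<and> (\<forall>x\<in>{1..n}. card {\<rho>\<in>R. reach F x \<rho>} = 1)"

definition PP :: "nat \<Rightarrow> nat \<Rightarrow> nat \<Rightarrow> (nat set set \<times> nat set) set" where
  "PP n k r = {(F, R). F \<subseteq> hyperedges n k \<and> \<not> has_cycle F \<and> RC n F R \<and> card R = r}"

lemma RC_ex: "RC n F R \<Longrightarrow> x \<in> {1..n} \<Longrightarrow> \<exists>\<rho>\<in>R. reach F x \<rho>"
  unfolding RC_def by (metis (mono_tags, lifting) card_1_singletonE empty_iff insert_iff mem_Collect_eq)

lemma RC_uniq: "RC n F R \<Longrightarrow> x \<in> {1..n} \<Longrightarrow> a \<in> R \<Longrightarrow> b \<in> R \<Longrightarrow> reach F x a \<Longrightarrow> reach F x b \<Longrightarrow> a = b"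
  unfolding RC_def by (metis (mono_tags, lifting) card_1_singletonE singletonD mem_Collect_eq)

lemma RC_sub: "RC n F R \<Longrightarrow> R \<subseteq> {1..n}" unfolding RC_def by simp

lemma RC_intro:
  assumes "R \<subseteq> {1..n}" "\<And>x. x \<in> {1..n} \<Longrightarrow> \<exists>\<rho>\<in>R. reach F x \<rho>"
    "\<And>x a b. x \<in> {1..n} \<Longrightarrow> a \<in> R \<Longrightarrow> b \<in> R \<Longrightarrow> reach F x a \<Longrightarrow> reach F x b \<Longrightarrow> a = b"
  shows "RC n F R"
  unfolding RC_def
proof (intro conjI ballI)
  fix x assume x: "x \<in> {1..n}"
  then obtain \<rho> where "\<rho> \<in> R" "reach F x \<rho>" using assms(2) by blast
  then have "{\<rho>'\<in>R. reach F x \<rho>'} = {\<rho>}" using assms(3)[OF x] by blast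
  then show "card {\<rho>\<in>R. reach F x \<rho>} = 1" by simp
qed (use assms in auto)

lemma finite_hyperedges: "finite (hyperedges n k)"
proof -
  have "hyperedges n k \<subseteq> Pow {1..n}" by (auto simp: hyperedges_def)
  then show ?thesis by (rule finite_subset) simp
qed

lemma finite_PP: "finite (PP n k r)"
proof -
  have "PP n k r \<subseteq> Pow (hyperedges n k) \<times> Pow {1..n}"
    by (auto simp: PP_def RC_def)
  then show ?thesis by (rule finite_subset) (simp add: finite_hyperedges)
qed

lemma conn_image:
  assumes "F \<subseteq> hyperedges n k" "x \<in> {1..n}"
  shows "connected_rel n F `` {x} = {y\<in>{1..n}. reach F x y}"
  using assms by (auto simp: connected_rel_def reach_def)

lemma components_eq:
  assumes "F \<subseteq> hyperedges n k"
  shows "components n F = (\<lambda>x. {y\<in>{1..n}. reach F x y}) ` {1..n}"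
  unfolding components_def quotient_def using conn_image[OF assms] by auto

lemma card_components:
  assumes F: "F \<subseteq> hyperedges n k" and R: "RC n F R"
  shows "card (components n F) = card R"
proof -
  define g where "g = (\<lambda>x. {y\<in>{1..n}. reach F x y})"
  have Rs: "R \<subseteq> {1..n}" using R by (rule RC_sub)
  have gx: "g x = g y" if "reach F x y" for x y
    using that reach_trans reach_sym unfolding g_def by blast
  have "g ` {1..n} = g ` R"
  proof
    show "g ` {1..n} \<subseteq> g ` R"
    proof
      fix z assume "z \<in> g ` {1..n}"
      then obtain x where x: "x \<in> {1..n}" "z = g x" by blast
      then obtain \<rho> where "\<rho> \<in> R" "reach F x \<rho>" using RC_ex[OF R] by blast
      then show "z \<in> g ` R" using x gx by blast
    qed
  qed (use Rs in auto)
  moreover have "inj_on g R"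
  proof (rule inj_onI)
    fix a b assume ab: "a \<in> R" "b \<in> R" "g a = g b"
    then have "b \<in> g a" using Rs unfolding g_def by auto
    then have "reach F a b" unfolding g_def by simp
    then show "a = b" using RC_uniq[OF R, of a a b] ab Rs by auto
  qed
  ultimately show ?thesis
    using components_eq[OF F] card_image unfolding g_def by metis
qed

lemma rooted_forests_eq: "rooted_forests n k r = PP n k r"
proof -
  have key: "(\<forall>C\<in>components n F. card (R \<inter> C) = 1) \<longleftrightarrow> (\<forall>x\<in>{1..n}. card {\<rho>\<in>R. reach F x \<rho>} = 1)"
    if F: "F \<subseteq> hyperedges n k" and R: "R \<subseteq> {1..n}" for F R
  proof -
    have "R \<inter> {y\<in>{1..n}. reach F x y} = {\<rho>\<in>R. reach F x \<rho>}" for x using R by auto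
    then show ?thesis using components_eq[OF F] by auto
  qed
  show ?thesis
    unfolding rooted_forests_def PP_def spanning_hyperforest_def
    using key card_components unfolding RC_def by auto
qed


definition choices :: "nat \<Rightarrow> nat \<Rightarrow> nat set set \<Rightarrow> nat set \<Rightarrow> (nat \<times> nat set) set" where
  "choices n k F R = {(v, S). v \<in> {1..n} \<and> S \<subseteq> R \<and> card S = k - 1 \<and> (\<forall>s\<in>S. \<not> reach F v s)}"

definition TT :: "nat \<Rightarrow> nat \<Rightarrow> nat \<Rightarrow> ((nat set set \<times> nat set) \<times> (nat \<times> nat set)) set" where
  "TT n k r = Sigma (PP n k r) (\<lambda>p. choices n k (fst p) (snd p))"

definition stepf :: "(nat set set \<times> nat set) \<times> (nat \<times> nat set) \<Rightarrow> (nat set set \<times> nat set) \<times> nat set" where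
  "stepf x = (case x of ((F, R), (v, S)) \<Rightarrow> ((insert (insert v S) F, R - S), insert v S))"

lemma RC_roots: "RC n F R \<Longrightarrow> a \<in> R \<Longrightarrow> b \<in> R \<Longrightarrow> reach F a b \<Longrightarrow> a = b"
proof -
  assume R: "RC n F R" and ab: "a \<in> R" "b \<in> R" "reach F a b"
  have "a \<in> {1..n}" using RC_sub[OF R] ab by blast
  from RC_uniq[OF R this ab(1,2)] ab show "a = b" by simp
qed

lemma succ_valid:
  assumes k: "k \<ge> 2" and P: "(F, R) \<in> PP n k r" and v: "v \<in> {1..n}" and SR: "S \<subseteq> R"
    and cS: "card S = k - 1" and nr: "\<forall>s\<in>S. \<not> reach F v s"
  shows "(insert (insert v S) F, R - S) \<in> PP n k (r - (k - 1))"
proof -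
  let ?e = "insert v S"
  have F: "F \<subseteq> hyperedges n k" and ac: "\<not> has_cycle F" and R: "RC n F R" and cR: "card R = r"
    using P by (auto simp: PP_def)
  have Rs: "R \<subseteq> {1..n}" using R by (rule RC_sub)
  have finS: "finite S"
  proof (rule ccontr)
    assume "infinite S" then have "card S = 0" by simp
    with cS k show False by simp
  qed
  have vS: "v \<notin> S" using nr by auto
  have e_edge: "?e \<in> hyperedges n k"
    using v SR Rs cS vS finS k unfolding hyperedges_def by auto
  have Sconn: "\<not> reach F a b" if "a \<in> S" "b \<in> S" "a \<noteq> b" for a b
  proof
    assume "reach F a b"
    moreover have "a \<in> R" "b \<in> R" using that SR by auto
    moreover have "a \<in> {1..n}" using \<open>a \<in> R\<close> Rs by auto
    ultimately show False using RC_uniq[OF R, of a a b] that by simp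
  qed
  have ac': "\<not> has_cycle (insert ?e F)"
  proof (rule add_edge_acyclic[OF ac])
    fix a b assume "a \<in> ?e" "b \<in> ?e" "a \<noteq> b"
    then show "\<not> reach F a b" using Sconn nr reach_sym by blast
  qed
  have char: "reach F x \<rho> \<or> (reach F v \<rho> \<and> (\<exists>a\<in>?e. reach F x a))"
    if "\<rho> \<in> R - S" "reach (insert ?e F) x \<rho>" for x \<rho>
  proof -
    from reach_insert[OF that(2)] show ?thesis
    proof
      assume "\<exists>a\<in>?e. \<exists>b\<in>?e. reach F x a \<and> reach F b \<rho>"
      then obtain a b where ab: "a \<in> ?e" "b \<in> ?e" "reach F x a" "reach F b \<rho>" by blast
      have "b = v"
      proof (rule ccontr)
        assume "b \<noteq> v"
        then have "b \<in> S" using ab by simp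
        then have "b \<in> R" using SR by blast
        then have "b = \<rho>" using RC_roots[OF R, of b \<rho>] that ab by blast
        with \<open>b \<in> S\<close> that show False by simp
      qed
      with ab show ?thesis by blast
    qed simp
  qed
  have RC': "RC n (insert ?e F) (R - S)"
  proof (rule RC_intro)
    show "R - S \<subseteq> {1..n}" using Rs by auto
  next
    fix x assume x: "x \<in> {1..n}"
    obtain \<rho> where \<rho>: "\<rho> \<in> R" "reach F x \<rho>" using RC_ex[OF R x] by blast
    show "\<exists>\<rho>\<in>R - S. reach (insert ?e F) x \<rho>"
    proof (cases "\<rho> \<in> S")
      case False
      then show ?thesis using \<rho> reach_mono[of F "insert ?e F"] by blast
    next
      case True
      obtain \<rho>v where \<rho>v: "\<rho>v \<in> R" "reach F v \<rho>v" using RC_ex[OF R v] by blast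
      have "\<rho>v \<notin> S" using nr \<rho>v by blast
      have "reach (insert ?e F) x \<rho>" using \<rho> reach_mono[of F "insert ?e F"] by blast
      moreover have "reach (insert ?e F) \<rho> v" using True by (intro reach_edge[of ?e]) auto
      moreover have "reach (insert ?e F) v \<rho>v" using \<rho>v reach_mono[of F "insert ?e F"] by blast
      ultimately show ?thesis using \<rho>v \<open>\<rho>v \<notin> S\<close> reach_trans by blast
    qed
  next
    fix x a b assume x: "x \<in> {1..n}" and a: "a \<in> R - S" and b: "b \<in> R - S"
      and ra: "reach (insert ?e F) x a" and rb: "reach (insert ?e F) x b"
    have A: "reach F x a \<or> (reach F v a \<and> (\<exists>c\<in>?e. reach F x c))" using char[OF a ra] .
    have B: "reach F x b \<or> (reach F v b \<and> (\<exists>c\<in>?e. reach F x c))" using char[OF b rb] .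
    have side: "reach F x \<rho> \<Longrightarrow> \<rho> \<in> R - S \<Longrightarrow> reach F v \<rho>' \<Longrightarrow> c \<in> ?e \<Longrightarrow> reach F x c \<Longrightarrow> reach F x \<rho>'"
      for \<rho> \<rho>' c
    proof -
      assume h: "reach F x \<rho>" "\<rho> \<in> R - S" "reach F v \<rho>'" "c \<in> ?e" "reach F x c"
      show "reach F x \<rho>'"
      proof (cases "c = v")
        case True then show ?thesis using h reach_trans by blast
      next
        case False
        then have "c \<in> S" using h by simp
        then have "c \<in> R" using SR by blast
        then have "c = \<rho>" using RC_uniq[OF R x, of c \<rho>] h by blast
        with h \<open>c \<in> S\<close> show ?thesis by simp
      qed
    qed
    show "a = b"
      using A B
    proof (elim disjE conjE)
      assume "reach F x a" "reach F x b" then show ?thesis using RC_uniq[OF R x, of a b] a b by blast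
    next
      assume "reach F x a" "reach F v b" "\<exists>c\<in>?e. reach F x c"
      then have "reach F x b" using side a by blast
      then show ?thesis using RC_uniq[OF R x, of a b] a b \<open>reach F x a\<close> by blast
    next
      assume "reach F x b" "reach F v a" "\<exists>c\<in>?e. reach F x c"
      then have "reach F x a" using side b by blast
      then show ?thesis using RC_uniq[OF R x, of a b] a b \<open>reach F x b\<close> by blast
    next
      assume "reach F v a" "reach F v b"
      then show ?thesis using RC_uniq[OF R v, of a b] a b by blast
    qed
  qed
  have "card (R - S) = r - (k - 1)" using cR cS SR finS by (simp add: card_Diff_subset)
  then show ?thesis using F e_edge ac' RC' by (auto simp: PP_def)
qed

lemma pred_exists:
  assumes k: "k \<ge> 2" and P: "(F', R') \<in> PP n k r'" and e: "e \<in> F'"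
  shows "\<exists>v S. ((F' - {e}, R' \<union> S), (v, S)) \<in> TT n k (r' + (k - 1)) \<and> insert v S = e \<and> S \<inter> R' = {}"
proof -
  let ?F = "F' - {e}"
  have F': "F' \<subseteq> hyperedges n k" and ac: "\<not> has_cycle F'" and R': "RC n F' R'" and cR: "card R' = r'"
    using P by (auto simp: PP_def)
  have Rs: "R' \<subseteq> {1..n}" using R' by (rule RC_sub)
  have eh: "e \<subseteq> {1..n}" "card e = k" using e F' by (auto simp: hyperedges_def)
  have fe: "finite e"
  proof (rule ccontr)
    assume "infinite e" then have "card e = 0" by simp
    with eh k show False by simp
  qed
  have "e \<noteq> {}" using eh k by auto
  then obtain a where a: "a \<in> e" by blast
  then have an: "a \<in> {1..n}" using eh by auto
  obtain \<rho> where \<rho>: "\<rho> \<in> R'" "reach F' a \<rho>" using RC_ex[OF R' an] by blast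
  have disc: "\<And>x y. x \<in> e \<Longrightarrow> y \<in> e \<Longrightarrow> x \<noteq> y \<Longrightarrow> \<not> reach ?F x y"
    using remove_edge_disconnected[OF ac e] by blast
  have "\<exists>v\<in>e. reach ?F \<rho> v"
  proof -
    have "reach (insert e ?F) \<rho> a" unfolding insert_Diff[OF e] using \<rho> reach_sym by blast
    from reach_insert[OF this] show ?thesis using a by blast
  qed
  then obtain v where v: "v \<in> e" "reach ?F \<rho> v" by blast
  define S where "S = e - {v}"
  have vn: "v \<in> {1..n}" using v eh by auto
  have Fsub: "?F \<subseteq> F'" by auto
  have nr: "\<forall>s\<in>S. \<not> reach ?F v s" using disc v unfolding S_def by auto
  have disj: "S \<inter> R' = {}"
  proof (rule ccontr)
    assume "S \<inter> R' \<noteq> {}"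
    then obtain s where s: "s \<in> S" "s \<in> R'" by blast
    have "reach F' a s" using s a e unfolding S_def by (intro reach_edge[of e]) auto
    then have "s = \<rho>" using RC_uniq[OF R' an, of s \<rho>] s \<rho> by simp
    then have "reach ?F s v" using v by simp
    then show False using disc[of s v] s v by (simp add: S_def)
  qed
  have cS: "card S = k - 1" using eh fe v unfolding S_def by simp
  have ins: "insert v S = e" using v unfolding S_def by auto
  have finS: "finite S" using fe unfolding S_def by simp
  let ?R = "R' \<union> S"
  have RC: "RC n ?F ?R"
  proof (rule RC_intro)
    show "?R \<subseteq> {1..n}" using Rs eh unfolding S_def by auto
  next
    fix x assume x: "x \<in> {1..n}"
    obtain \<rho>x where \<rho>x: "\<rho>x \<in> R'" "reach F' x \<rho>x" using RC_ex[OF R' x] by blast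
    have "reach (insert e ?F) x \<rho>x" unfolding insert_Diff[OF e] using \<rho>x by blast
    from reach_insert[OF this]
    have "reach ?F x \<rho>x \<or> (\<exists>u\<in>e. reach ?F x u)" by blast
    then show "\<exists>\<rho>\<in>?R. reach ?F x \<rho>"
    proof
      assume "\<exists>u\<in>e. reach ?F x u"
      then obtain u where u: "u \<in> e" "reach ?F x u" by blast
      show ?thesis
      proof (cases "u = v")
        case True
        then have "reach ?F x \<rho>" using u v reach_sym reach_trans by metis
        then show ?thesis using \<rho> by blast
      next
        case False
        then have "u \<in> S" using u unfolding S_def by simp
        then show ?thesis using u by blast
      qed
    qed (use \<rho>x in blast)
  next
    fix x b c assume x: "x \<in> {1..n}" and b: "b \<in> ?R" and c: "c \<in> ?R"
      and rb: "reach ?F x b" and rc: "reach ?F x c"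
    have mix: "b' = c'" if b': "b' \<in> S" and c': "c' \<in> R'" and rb': "reach ?F x b'" and rc': "reach ?F x c'"
      for b' c'
    proof -
      have "reach F' x b'" using rb' reach_mono[OF Fsub] by blast
      moreover have "reach F' b' v" using b' v e unfolding S_def by (intro reach_edge[of e]) auto
      moreover have "reach F' v \<rho>" using v reach_mono[OF Fsub] reach_sym by blast
      ultimately have "reach F' x \<rho>" using reach_trans by blast
      moreover have "reach F' x c'" using rc' reach_mono[OF Fsub] by blast
      ultimately have "c' = \<rho>" using RC_uniq[OF R' x, of c' \<rho>] c' \<rho> by blast
      then have "reach ?F b' v" using rb' rc' v reach_sym reach_trans by metis
      then show ?thesis using disc[of b' v] b' v unfolding S_def by auto
    qed
    show "b = c"
    proof (cases "b \<in> S")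
      case True
      show ?thesis
      proof (cases "c \<in> S")
        case True
        have "reach ?F b c" using rb rc reach_sym reach_trans by metis
        then show ?thesis using disc[of b c] \<open>b \<in> S\<close> True unfolding S_def by auto
      next
        case False
        then show ?thesis using mix[OF \<open>b \<in> S\<close> _ rb rc] c by auto
      qed
    next
      case False
      then have bR: "b \<in> R'" using b by simp
      show ?thesis
      proof (cases "c \<in> S")
        case True
        then show ?thesis using mix[OF True bR rc rb] by simp
      next
        case False
        then have "c \<in> R'" using c by simp
        then show ?thesis using RC_uniq[OF R' x] bR rb rc reach_mono[OF Fsub] by blast
      qed
    qed
  qed
  have cardR: "card ?R = r' + (k - 1)"
    proof -
    have "finite R'" using Rs finite_subset by blast
    then show ?thesis using cR cS disj finS card_Un_disjoint[of R' S] by (simp add: Int_commute)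
  qed
  have "?F \<subseteq> hyperedges n k" using F' by blast
  then have "(?F, ?R) \<in> PP n k (r' + (k - 1))"
    using acyclic_mono[OF Fsub ac] RC cardR by (simp add: PP_def)
  moreover have "(v, S) \<in> choices n k ?F ?R"
    using vn cS nr by (simp add: choices_def)
  ultimately have "((?F, ?R), (v, S)) \<in> TT n k (r' + (k - 1))" by (simp add: TT_def)
  then show ?thesis using ins disj by (intro exI[of _ v] exI[of _ S]) simp
qed


lemma TT_mem:
  "(((F, R), (v, S)) \<in> TT n k r) \<longleftrightarrow> (F, R) \<in> PP n k r \<and> v \<in> {1..n} \<and> S \<subseteq> R \<and> card S = k - 1 \<and> (\<forall>s\<in>S. \<not> reach F v s)"
  by (simp add: TT_def choices_def)

lemma step_inj:
  assumes k: "k \<ge> 2"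
  shows "inj_on stepf (TT n k r)"
proof (rule inj_onI)
  fix x1 x2 assume x1: "x1 \<in> TT n k r" and x2: "x2 \<in> TT n k r" and eq: "stepf x1 = stepf x2"
  obtain F1 R1 v1 S1 where x1d: "x1 = ((F1, R1), (v1, S1))" by (metis prod.collapse)
  obtain F2 R2 v2 S2 where x2d: "x2 = ((F2, R2), (v2, S2))" by (metis prod.collapse)
  have m1: "(F1, R1) \<in> PP n k r" "v1 \<in> {1..n}" "S1 \<subseteq> R1" "card S1 = k - 1" "\<forall>s\<in>S1. \<not> reach F1 v1 s"
    using x1 x1d TT_mem by auto
  have m2: "(F2, R2) \<in> PP n k r" "v2 \<in> {1..n}" "S2 \<subseteq> R2" "card S2 = k - 1" "\<forall>s\<in>S2. \<not> reach F2 v2 s"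
    using x2 x2d TT_mem by auto
  define e where "e = insert v1 S1"
  have e2: "insert v2 S2 = e" and Feq: "insert e F1 = insert e F2" and Req: "R1 - S1 = R2 - S2"
    using eq x1d x2d by (auto simp: stepf_def e_def)
  have neS: "S \<noteq> {}" if "card S = k - 1" for S :: "nat set" using that k by auto
  have eF1: "e \<notin> F1"
  proof
    assume "e \<in> F1"
    obtain s where "s \<in> S1" using neS[OF m1(4)] by blast
    then have "reach F1 v1 s" using \<open>e \<in> F1\<close> by (intro reach_edge[of e]) (auto simp: e_def)
    with m1(5) \<open>s \<in> S1\<close> show False by blast
  qed
  have eF2: "e \<notin> F2"
  proof
    assume "e \<in> F2"
    obtain s where "s \<in> S2" using neS[OF m2(4)] by blast
    then have "reach F2 v2 s" using \<open>e \<in> F2\<close> e2 by (intro reach_edge[of e]) auto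
    with m2(5) \<open>s \<in> S2\<close> show False by blast
  qed
  have FF: "F1 = F2"
  proof -
    have "F1 = insert e F1 - {e}" using eF1 by simp
    also have "\<dots> = insert e F2 - {e}" using Feq by simp
    also have "\<dots> = F2" using eF2 by simp
    finally show ?thesis .
  qed
  have v1S: "v1 \<notin> S1" using m1(5) by auto
  have v2S: "v2 \<notin> S2" using m2(5) by auto
  show "x1 = x2"
  proof (cases "v1 = v2")
    case True
    have "S1 = e - {v1}" using v1S by (auto simp: e_def)
    moreover have "S2 = e - {v2}" using v2S e2 by auto
    ultimately have SS: "S1 = S2" using True by simp
    have "R1 = (R1 - S1) \<union> S1" using m1(3) by auto
    also have "\<dots> = (R2 - S2) \<union> S2" using Req SS by simp
    also have "\<dots> = R2" using m2(3) by auto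
    finally show ?thesis using x1d x2d FF SS True by simp
  next
    case False
    have v1S2: "v1 \<in> S2" using False e2 by (auto simp: e_def)
    have R1: "RC n F1 R1" and R2: "RC n F2 R2" using m1(1) m2(1) by (auto simp: PP_def)
    obtain \<rho> where \<rho>: "\<rho> \<in> R1" "reach F1 v1 \<rho>" using RC_ex[OF R1 m1(2)] by blast
    have "\<rho> \<notin> S1" using \<rho> m1(5) by blast
    then have \<rho>R: "\<rho> \<in> R2 - S2" using \<rho> Req by blast
    have "v1 \<in> R2" using v1S2 m2(3) by blast
    then have "\<rho> = v1" using RC_uniq[OF R2 m1(2), of \<rho> v1] \<rho>R \<rho> FF by simp
    with \<rho>R v1S2 show ?thesis by simp
  qed
qed

lemma step_image:
  assumes k: "k \<ge> 2" and r: "r \<ge> k - 1"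
  shows "stepf ` TT n k r = Sigma (PP n k (r - (k - 1))) fst"
proof
  show "stepf ` TT n k r \<subseteq> Sigma (PP n k (r - (k - 1))) fst"
  proof
    fix y assume "y \<in> stepf ` TT n k r"
    then obtain x where x: "x \<in> TT n k r" "y = stepf x" by blast
    obtain F R v S where xd: "x = ((F, R), (v, S))" by (metis prod.collapse)
    have m: "(F, R) \<in> PP n k r" "v \<in> {1..n}" "S \<subseteq> R" "card S = k - 1" "\<forall>s\<in>S. \<not> reach F v s"
      using x xd TT_mem by auto
    have "(insert (insert v S) F, R - S) \<in> PP n k (r - (k - 1))"
      using succ_valid[OF k m] .
    then show "y \<in> Sigma (PP n k (r - (k - 1))) fst"
      using x xd by (simp add: stepf_def)
  qed
next
  show "Sigma (PP n k (r - (k - 1))) fst \<subseteq> stepf ` TT n k r"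
  proof
    fix y assume y: "y \<in> Sigma (PP n k (r - (k - 1))) fst"
    obtain F' R' e where yd: "y = ((F', R'), e)" by (metis prod.collapse)
    have P: "(F', R') \<in> PP n k (r - (k - 1))" and e: "e \<in> F'" using y yd by auto
    obtain v S where vS: "((F' - {e}, R' \<union> S), (v, S)) \<in> TT n k (r - (k - 1) + (k - 1))"
      "insert v S = e" "S \<inter> R' = {}"
      using pred_exists[OF k P e] by blast
    have "r - (k - 1) + (k - 1) = r" using r by simp
    then have inT: "((F' - {e}, R' \<union> S), (v, S)) \<in> TT n k r" using vS(1) by simp
    have "(R' \<union> S) - S = R'" using vS(3) by blast
    then have "stepf ((F' - {e}, R' \<union> S), (v, S)) = y"
      using vS(2) e yd by (simp add: stepf_def insert_absorb)
    with inT show "y \<in> stepf ` TT n k r" by force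
  qed
qed

lemma card_choices:
  assumes k: "k \<ge> 2" and P: "(F, R) \<in> PP n k r"
  shows "card (choices n k F R) = n * ((r - 1) choose (k - 1))"
proof -
  have R: "RC n F R" and cR: "card R = r" using P by (auto simp: PP_def)
  have Rs: "R \<subseteq> {1..n}" using R by (rule RC_sub)
  have finR: "finite R" using Rs finite_subset by blast
  define B where "B = (\<lambda>v. {S. S \<subseteq> R \<and> card S = k - 1 \<and> (\<forall>s\<in>S. \<not> reach F v s)})"
  have ch: "choices n k F R = Sigma {1..n} B" unfolding choices_def B_def by auto
  have finB: "finite (B v)" for v
  proof -
    have "B v \<subseteq> Pow R" unfolding B_def by auto
    then show ?thesis using finR finite_subset by blast
  qed
  have cB: "card (B v) = (r - 1) choose (k - 1)" if v: "v \<in> {1..n}" for v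
  proof -
    obtain \<rho> where \<rho>: "\<rho> \<in> R" "reach F v \<rho>" using RC_ex[OF R v] by blast
    have iff: "reach F v s \<longleftrightarrow> s = \<rho>" if "s \<in> R" for s
      using RC_uniq[OF R v, of s \<rho>] that \<rho> by blast
    have "B v = {S. S \<subseteq> R - {\<rho>} \<and> card S = k - 1}"
      unfolding B_def using iff by blast
    moreover have "card (R - {\<rho>}) = r - 1" using \<rho> cR finR by simp
    ultimately show ?thesis using n_subsets[of "R - {\<rho>}" "k - 1"] finR by simp
  qed
  have "card (Sigma {1..n} B) = (\<Sum>v\<in>{1..n}. card (B v))"
    using finB by (simp add: card_SigmaI)
  also have "\<dots> = (\<Sum>v\<in>{1..n}. (r - 1) choose (k - 1))" using cB by (rule sum.cong[OF refl])
  also have "\<dots> = n * ((r - 1) choose (k - 1))" by simp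
  finally show ?thesis using ch by simp
qed

lemma card_TT:
  assumes k: "k \<ge> 2"
  shows "card (TT n k r) = card (PP n k r) * (n * ((r - 1) choose (k - 1)))"
proof -
  have fin: "finite (choices n k (fst p) (snd p))" if "p \<in> PP n k r" for p
  proof -
    have "choices n k (fst p) (snd p) \<subseteq> {1..n} \<times> Pow (snd p)" by (auto simp: choices_def)
    moreover have "finite (snd p)" using that by (auto simp: PP_def RC_def finite_subset)
    ultimately show ?thesis using finite_subset by blast
  qed
  have "card (TT n k r) = (\<Sum>p\<in>PP n k r. card (choices n k (fst p) (snd p)))"
    unfolding TT_def using finite_PP fin by (simp add: card_SigmaI)
  also have "\<dots> = (\<Sum>p\<in>PP n k r. n * ((r - 1) choose (k - 1)))"
  proof (rule sum.cong[OF refl])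
    fix p assume "p \<in> PP n k r"
    then show "card (choices n k (fst p) (snd p)) = n * ((r - 1) choose (k - 1))"
      using card_choices[OF k, of "fst p" "snd p"] by simp
  qed
  also have "\<dots> = card (PP n k r) * (n * ((r - 1) choose (k - 1)))" by simp
  finally show ?thesis .
qed

lemma edge_count:
  assumes k: "k \<ge> 2"
  shows "(F, R) \<in> PP n k r \<Longrightarrow> card F * (k - 1) + r = n"
proof (induction "card F" arbitrary: F R r)
  case 0
  have F: "F \<subseteq> hyperedges n k" and R: "RC n F R" and cR: "card R = r"
    using "0.prems" by (auto simp: PP_def)
  have "finite F" using F finite_hyperedges finite_subset by blast
  then have F0: "F = {}" using "0.hyps" by simp
  have "{1..n} \<subseteq> R"
  proof
    fix x assume x: "x \<in> {1..n}"
    obtain \<rho> where "\<rho> \<in> R" "reach F x \<rho>" using RC_ex[OF R x] by blast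
    then show "x \<in> R" using F0 reach_empty by simp
  qed
  then have "R = {1..n}" using RC_sub[OF R] by blast
  then show ?case using cR "0.hyps" by simp
next
  case (Suc c)
  have F: "F \<subseteq> hyperedges n k" using Suc.prems by (auto simp: PP_def)
  have "finite F" using F finite_hyperedges finite_subset by blast
  then have "F \<noteq> {}" using Suc.hyps(2) by auto
  then obtain e where e: "e \<in> F" by blast
  obtain v S where vS: "((F - {e}, R \<union> S), (v, S)) \<in> TT n k (r + (k - 1))"
    using pred_exists[OF k Suc.prems e] by blast
  then have P': "(F - {e}, R \<union> S) \<in> PP n k (r + (k - 1))" using TT_mem by blast
  have "card (F - {e}) = c" using Suc.hyps(2) e \<open>finite F\<close> by simp
  then have "c * (k - 1) + (r + (k - 1)) = n" using Suc.hyps(1)[OF _ P'] by simp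
  moreover have "card F = Suc c" using Suc.hyps(2) by simp
  ultimately show ?case by simp
qed

lemma recurrence:
  assumes k: "k \<ge> 2" and r: "r \<ge> k"
  shows "card (PP n k r) * (n * ((r - 1) choose (k - 1))) = card (PP n k (r - (k - 1))) * ((n - (r - (k - 1))) div (k - 1))"
proof -
  have "card (PP n k r) * (n * ((r - 1) choose (k - 1))) = card (TT n k r)" using card_TT[OF k] by simp
  also have "\<dots> = card (stepf ` TT n k r)" using step_inj[OF k] by (simp add: card_image)
  also have "\<dots> = card (Sigma (PP n k (r - (k - 1))) fst)" using step_image[OF k] r by simp
  also have "\<dots> = (\<Sum>p\<in>PP n k (r - (k - 1)). card (fst p))"
  proof -
    have "finite (fst p)" if "p \<in> PP n k (r - (k - 1))" for p
    proof -
      have "fst p \<subseteq> hyperedges n k" using that by (auto simp: PP_def)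
      then show ?thesis by (rule finite_subset[OF _ finite_hyperedges])
    qed
    then show ?thesis using finite_PP by (simp add: card_SigmaI)
  qed
  also have "\<dots> = (\<Sum>p\<in>PP n k (r - (k - 1)). (n - (r - (k - 1))) div (k - 1))"
  proof (rule sum.cong[OF refl])
    fix p assume p: "p \<in> PP n k (r - (k - 1))"
    obtain F R where pd: "p = (F, R)" by (metis prod.collapse)
    have "card F * (k - 1) + (r - (k - 1)) = n" using edge_count[OF k] p pd by simp
    then have "n - (r - (k - 1)) = card F * (k - 1)" by simp
    then show "card (fst p) = (n - (r - (k - 1))) div (k - 1)" using pd k by simp
  qed
  also have "\<dots> = card (PP n k (r - (k - 1))) * ((n - (r - (k - 1))) div (k - 1))" by simp
  finally show ?thesis .
qed


lemma PP_base:
  assumes k: "k \<ge> 2"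
  shows "PP n k n = {({}, {1..n})}"
proof
  show "PP n k n \<subseteq> {({}, {1..n})}"
  proof
    fix p assume p: "p \<in> PP n k n"
    obtain F R where pd: "p = (F, R)" by (metis prod.collapse)
    have P: "(F, R) \<in> PP n k n" using p pd by simp
    have "card F * (k - 1) + n = n" using edge_count[OF k P] .
    then have "card F = 0" using k by simp
    moreover have "finite F" using P finite_hyperedges finite_subset by (auto simp: PP_def)
    ultimately have F0: "F = {}" by simp
    have R: "RC n F R" using P by (simp add: PP_def)
    have "{1..n} \<subseteq> R"
    proof
      fix x assume x: "x \<in> {1..n}"
      obtain \<rho> where "\<rho> \<in> R" "reach F x \<rho>" using RC_ex[OF R x] by blast
      then show "x \<in> R" using F0 reach_empty by simp
    qed
    then have "R = {1..n}" using RC_sub[OF R] by blast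
    then show "p \<in> {({}, {1..n})}" using pd F0 by simp
  qed
next
  have "\<not> has_cycle {}"
  proof
    assume "has_cycle {}"
    then obtain l :: nat and es :: "nat \<Rightarrow> nat set" where "l \<ge> 2" "\<forall>i<l. es i \<in> ({} :: nat set set)"
      unfolding has_cycle_def by blast
    then show False by (metis empty_iff not_gr0 not_numeral_le_zero le0 le_zero_eq)
  qed
  moreover have "RC n {} {1..n}"
    by (rule RC_intro) (auto simp: reach_empty)
  ultimately show "{({}, {1..n})} \<subseteq> PP n k n" by (simp add: PP_def)
qed

lemma count_nat:
  assumes k: "k \<ge> 2"
  shows "m * (k - 1) < n \<Longrightarrow>
    card (PP n k (n - m * (k - 1))) * (fact m * fact (k - 1) ^ m * fact (n - m * (k - 1) - 1)) = fact (n - 1) * n ^ m"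
proof (induction m)
  case 0
  then show ?case using PP_base[OF k] by simp
next
  case (Suc m)
  define j where "j = k - 1"
  define r where "r = n - m * j"
  define A where "A = n - Suc m * j - 1"
  have j1: "j \<ge> 1" using k j_def by simp
  have lt: "Suc m * j < n" using Suc.prems j_def by simp
  have "m * j \<le> Suc m * j" by simp
  then have mlt: "m * j < n" using lt by linarith
  have IH: "card (PP n k r) * (fact m * fact j ^ m * fact (r - 1)) = fact (n - 1) * n ^ m"
    using Suc.IH mlt unfolding r_def j_def by simp
  have "j + m * j < n" using lt by simp
  then have "r \<ge> j + 1" unfolding r_def by linarith
  then have rk: "r \<ge> k" using k j_def by simp
  have r': "r - (k - 1) = n - Suc m * j" by (simp add: r_def diff_diff_left j_def add.commute)
  have dv: "(n - (r - (k - 1))) div (k - 1) = Suc m"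
  proof -
    have h: "n - (r - (k - 1)) = Suc m * j" using r' lt by simp
    have "(Suc m * j) div j = Suc m" using j1 by simp
    then show ?thesis using h unfolding j_def[symmetric] by simp
  qed
  have rec: "card (PP n k r) * (n * ((r - 1) choose j)) = card (PP n k (n - Suc m * j)) * Suc m"
    using recurrence[OF k rk] r' dv unfolding j_def by simp
  have rA: "r - 1 = A + j" unfolding r_def A_def using \<open>j + m * j < n\<close> by simp
  have bf: "fact j * fact A * ((A + j) choose j) = fact (A + j)"
    using binomial_fact_lemma[of j "A + j"] by simp
  have "card (PP n k (n - Suc m * j)) * (fact (Suc m) * fact j ^ Suc m * fact A)
      = (card (PP n k (n - Suc m * j)) * Suc m) * (fact m * fact j ^ m * fact j * fact A)"
    by (simp add: fact_Suc algebra_simps)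
  also have "\<dots> = card (PP n k r) * (n * ((r - 1) choose j)) * (fact m * fact j ^ m * fact j * fact A)"
    using rec by simp
  also have "\<dots> = n * (card (PP n k r) * (fact m * fact j ^ m * (fact j * fact A * ((A + j) choose j))))"
    using rA by (simp add: algebra_simps)
  also have "\<dots> = n * (card (PP n k r) * (fact m * fact j ^ m * fact (r - 1)))"
    using bf rA by simp
  also have "\<dots> = fact (n - 1) * n ^ Suc m" using IH by simp
  finally show ?case unfolding A_def j_def by simp
qed


theorem mainTheorem9:
  fixes n r k :: nat
  assumes "k \<ge> 2" and "n \<ge> 1" and "1 \<le> r" and "r \<le> n"
  shows "((k - 1) dvd (n - r) \<longrightarrow>
           (let m = (n - r) div (k - 1) in
            real (t_count n r k) =
              real ((n - 1) choose (r - 1)) * fact (n - r) / (fact m * fact (k - 1) ^ m)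
              * real n ^ m)) \<and>
         (\<not> (k - 1) dvd (n - r) \<longrightarrow> t_count n r k = 0)"
proof (intro conjI impI)
  have k: "k \<ge> 2" using assms by simp
  have tc: "t_count n r k = card (PP n k r)" by (simp add: t_count_def rooted_forests_eq)
  {
    assume dv: "(k - 1) dvd (n - r)"
    define m where "m = (n - r) div (k - 1)"
    have nm: "n - r = m * (k - 1)" using dv unfolding m_def by simp
    have rr: "r = n - m * (k - 1)" using nm assms by simp
    have lt: "m * (k - 1) < n" using nm assms by simp
    have cn: "card (PP n k r) * (fact m * fact (k - 1) ^ m * fact (r - 1)) = fact (n - 1) * n ^ m"
      using count_nat[OF k lt] rr by simp
    then have cr: "real (card (PP n k r)) * (fact m * fact (k - 1) ^ m * fact (r - 1)) = fact (n - 1) * real n ^ m"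
      by (metis (mono_tags, lifting) of_nat_fact of_nat_mult of_nat_power)
    have bf: "real ((n - 1) choose (r - 1)) = fact (n - 1) / (fact (r - 1) * fact (n - r))"
    proof -
      have "n - 1 - (r - 1) = n - r" using assms by simp
      moreover have le: "r - 1 \<le> n - 1" using assms by simp
      ultimately show ?thesis using binomial_fact[OF le, where ?'a = real] by simp
    qed
    have pos: "(fact m * fact (k - 1) ^ m * fact (r - 1) :: real) \<noteq> 0" by simp
    have "real (card (PP n k r)) = fact (n - 1) * real n ^ m / (fact m * fact (k - 1) ^ m * fact (r - 1))"
      using cr pos by (simp add: field_simps)
    also have "\<dots> = real ((n - 1) choose (r - 1)) * fact (n - r) / (fact m * fact (k - 1) ^ m) * real n ^ m"
      unfolding bf by (simp add: field_simps)
    finally show "let m = (n - r) div (k - 1) in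
            real (t_count n r k) =
              real ((n - 1) choose (r - 1)) * fact (n - r) / (fact m * fact (k - 1) ^ m)
              * real n ^ m" unfolding m_def tc Let_def by simp
  }
  {
    assume ndv: "\<not> (k - 1) dvd (n - r)"
    have "PP n k r = {}"
    proof (rule ccontr)
      assume "PP n k r \<noteq> {}"
      then obtain F R where "(F, R) \<in> PP n k r" by auto
      then have "card F * (k - 1) + r = n" using edge_count[OF k] by blast
      then have "n - r = card F * (k - 1)" by simp
      with ndv show False by simp
    qed
    then show "t_count n r k = 0" using tc by simp
  }
qed

end
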